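(* For $n\ge5$, the symmetric space $\mathrm{SL}_{n+1}\mathbb R/\mathrm{SO}(n+1)$ has property $\mathbf E$.
   Context: Property $\mathbf E$ for a symmetric space $X$ of noncompact type: for every $x\in X$ with stabilizer $K$ (in the identity component of the isometry group) and every maximal flat through $x$ with tangent space $\mathcal F\subset T_xX$, putting $r=\mathrm{rank}(X)$, for any basis $\{v_1,\dots,v_r\}$ of $\mathcal F$ there is an orthonormal $3r$-frame $v_1',v_1'',v_1''',\dots,v_r',v_r'',v_r'''$ of $T_xX$ with $\mathrm{span}\{v_i',v_i'',v_i'''\}\subset(\mathrm{span}\{K_i\cdot\mathcal F\})^\perp$ for each $i$, where $K_i$ is the stabilizer of $v_i$ in $K$ acting by derivatives. *)

theory Defs
  imports "HOL-Analysis.Analysis"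
begin

text \<open>Model of X = SL_N(R)/SO(N) at the base point x = [I] (all points are
  equivalent under the transitive isometric action of SL_N(R)).  The tangent
  space T_x X is identified with p = symmetric traceless N x N matrices, with the
  (K-invariant, up to a positive scalar Killing) inner product tr(XY), which on
  symmetric matrices is the Euclidean inner product of real^'n^'n.  The
  stabilizer K = SO(N) acts on T_x X by derivatives, i.e. by conjugation.\<close>

definition tangent_p :: "(real^'n^'n) set" where
  "tangent_p = {X. transpose X = X \<and> trace X = 0}"

definition stabK :: "(real^'n^'n) set" where
  "stabK = {k. rotation_matrix k}"

definition Ad :: "real^'n^'n \<Rightarrow> real^'n^'n \<Rightarrow> real^'n^'n" where
  "Ad k X = k ** X ** transpose k"

text \<open>Tangent spaces at x of maximal flats through x are exactly the maximal
  abelian subspaces of p.\<close>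
definition abelian_subspace :: "(real^'n^'n) set \<Rightarrow> bool" where
  "abelian_subspace F \<longleftrightarrow> subspace F \<and> F \<subseteq> tangent_p \<and>
     (\<forall>X\<in>F. \<forall>Y\<in>F. X ** Y = Y ** X)"

definition maximal_flat_tangent :: "(real^'n^'n) set \<Rightarrow> bool" where
  "maximal_flat_tangent F \<longleftrightarrow> abelian_subspace F \<and>
     (\<forall>G. abelian_subspace G \<and> F \<subseteq> G \<longrightarrow> G = F)"

definition stab_of :: "real^'n^'n \<Rightarrow> (real^'n^'n) set" where
  "stab_of v = {k \<in> stabK. Ad k v = v}"

definition orth_in_tangent :: "(real^'n^'n) set \<Rightarrow> (real^'n^'n) set" where
  "orth_in_tangent S = {Y \<in> tangent_p. \<forall>Z\<in>S. Y \<bullet> Z = 0}"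

text \<open>Property E for SL_N(R)/SO(N) with N = CARD('n).  The rank r is dim F.
  The orthonormal 3r-frame is w i j, i < r, j < 3 (j = 0,1,2 for ', '', ''').\<close>
definition property_E_SL :: "'n::finite itself \<Rightarrow> bool" where
  "property_E_SL _ \<longleftrightarrow>
    (\<forall>F :: (real^'n^'n) set. maximal_flat_tangent F \<longrightarrow>
      (\<forall>v :: nat \<Rightarrow> real^'n^'n.
        (let r = dim F in
          ((\<forall>i<r. v i \<in> F) \<and> inj_on v {..<r} \<and> independent (v ` {..<r}) \<and>
            span (v ` {..<r}) = F) \<longrightarrow>
          (\<exists>w :: nat \<Rightarrow> nat \<Rightarrow> real^'n^'n.
             (\<forall>i<r. \<forall>j<3. w i j \<in> tangent_p \<and> norm (w i j) = 1) \<and>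
             (\<forall>i<r. \<forall>j<3. \<forall>i'<r. \<forall>j'<3. (i, j) \<noteq> (i', j') \<longrightarrow> w i j \<bullet> w i' j' = 0) \<and>
             (\<forall>i<r. span {w i 0, w i 1, w i 2} \<subseteq>
                orth_in_tangent (span (\<Union>k\<in>stab_of (v i). Ad k ` F)))))))"

end

theory Submission
  imports Defs
begin

lemma hall:
  fixes A :: "'i \<Rightarrow> 'b set"
  assumes "finite I" "\<forall>i\<in>I. finite (A i)" "\<forall>J\<subseteq>I. card J \<le> card (\<Union>(A ` J))"
  shows "\<exists>f. inj_on f I \<and> (\<forall>i\<in>I. f i \<in> A i)"
  using assms
proof (induction "card I" arbitrary: I A rule: less_induct)
  case less
  note fin = less.prems(1) and finA = less.prems(2) and H = less.prems(3)
  show ?case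
  proof (cases "I = {}")
    case True then show ?thesis by auto
  next
    case False
    show ?thesis
    proof (cases "\<exists>J. J \<subseteq> I \<and> J \<noteq> {} \<and> J \<noteq> I \<and> card (\<Union>(A ` J)) \<le> card J")
      case True
      then obtain J where J: "J \<subseteq> I" "J \<noteq> {}" "J \<noteq> I" "card (\<Union>(A ` J)) \<le> card J" by blast
      have fJ: "finite J" using J(1) fin finite_subset by blast
      have cJ: "card J < card I" using J fin by (meson psubsetI psubset_card_mono)
      have "\<exists>f. inj_on f J \<and> (\<forall>i\<in>J. f i \<in> A i)"
      proof (rule less(1)[of J A, OF cJ fJ])
        show "\<forall>i\<in>J. finite (A i)" using finA J(1) by blast
        show "\<forall>K\<subseteq>J. card K \<le> card (\<Union>(A ` K))" using H J(1) by blast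
      qed
      then obtain f1 where f1: "inj_on f1 J" "\<forall>i\<in>J. f1 i \<in> A i" by blast
      define X where "X = \<Union>(A ` J)"
      have fX: "finite X" unfolding X_def using fJ finA J(1) by auto
      have cX: "card X = card J" using J(4) H J(1) unfolding X_def by (meson order_antisym order_refl)
      define A2 where "A2 i = A i - X" for i
      have cIJ: "card (I - J) < card I" using J fin
        by (metis Diff_subset card_Diff_subset card_gt_0_iff diff_less finite_subset subset_empty)
      have H2: "\<forall>K\<subseteq>I - J. card K \<le> card (\<Union>(A2 ` K))"
      proof (intro allI impI)
        fix K assume K: "K \<subseteq> I - J"
        have fK: "finite K" using K fin finite_subset by blast
        have eq: "\<Union>(A2 ` K) = \<Union>(A ` (K \<union> J)) - X" unfolding A2_def X_def by auto
        have sub: "X \<subseteq> \<Union>(A ` (K \<union> J))" unfolding X_def by auto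
        have fU: "finite (\<Union>(A ` (K \<union> J)))" using fK fJ finA K J(1) by auto
        have "K \<union> J \<subseteq> I" using K J(1) by auto
        then have "card (K \<union> J) \<le> card (\<Union>(A ` (K \<union> J)))" using H by blast
        moreover have "card (K \<union> J) = card K + card J" using K fK fJ by (subst card_Un_disjoint) auto
        moreover have "card (\<Union>(A2 ` K)) = card (\<Union>(A ` (K \<union> J))) - card X"
          using eq sub fX fU by (simp add: card_Diff_subset)
        ultimately show "card K \<le> card (\<Union>(A2 ` K))" using cX by linarith
      qed
      obtain f2 where f2: "inj_on f2 (I - J)" "\<forall>i\<in>I - J. f2 i \<in> A2 i"
        using less(1)[of "I - J" A2, OF cIJ] fin finA H2 unfolding A2_def by auto
      define f where "f i = (if i \<in> J then f1 i else f2 i)" for i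
      have "inj_on f I"
      proof (rule inj_onI)
        fix x y assume xy: "x \<in> I" "y \<in> I" "f x = f y"
        show "x = y"
        proof (cases "x \<in> J"; cases "y \<in> J")
          assume "x \<in> J" "y \<in> J" then show ?thesis using xy f1(1) unfolding f_def by (auto dest: inj_onD)
        next
          assume "x \<notin> J" "y \<notin> J" then show ?thesis using xy f2(1) unfolding f_def by (auto dest: inj_onD)
        next
          assume a: "x \<in> J" "y \<notin> J"
          have "f x \<in> X" using a f1(2) unfolding f_def X_def by auto
          moreover have "f y \<notin> X" using a xy(2) f2(2) unfolding f_def A2_def by auto
          ultimately show ?thesis using xy by auto
        next
          assume a: "x \<notin> J" "y \<in> J"
          have "f y \<in> X" using a f1(2) unfolding f_def X_def by auto
          moreover have "f x \<notin> X" using a xy(1) f2(2) unfolding f_def A2_def by auto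
          ultimately show ?thesis using xy by auto
        qed
      qed
      moreover have "\<forall>i\<in>I. f i \<in> A i" using f1 f2 unfolding f_def A2_def by auto
      ultimately show ?thesis by blast
    next
      case False
      then have strict: "\<And>J. J \<subseteq> I \<Longrightarrow> J \<noteq> {} \<Longrightarrow> J \<noteq> I \<Longrightarrow> card J < card (\<Union>(A ` J))"
        by (meson not_le)
      obtain i0 where i0: "i0 \<in> I" using \<open>I \<noteq> {}\<close> by blast
      have "card {i0} \<le> card (A i0)" using H i0 by auto
      then have "A i0 \<noteq> {}" by auto
      then obtain x where x: "x \<in> A i0" by blast
      define A' where "A' i = A i - {x}" for i
      have cI': "card (I - {i0}) < card I" using i0 fin by (meson card_Diff1_less)
      have H': "\<forall>K\<subseteq>I - {i0}. card K \<le> card (\<Union>(A' ` K))"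
      proof (intro allI impI)
        fix K assume K: "K \<subseteq> I - {i0}"
        show "card K \<le> card (\<Union>(A' ` K))"
        proof (cases "K = {}")
          case True then show ?thesis by simp
        next
          case False
          have fK: "finite K" using K fin finite_subset by blast
          have "card K < card (\<Union>(A ` K))" using strict[of K] K False i0 by auto
          moreover have "card (\<Union>(A ` K) - {x}) \<ge> card (\<Union>(A ` K)) - 1"
            by (simp add: card_Diff_singleton_if)
          ultimately have "card K \<le> card (\<Union>(A ` K) - {x})" by linarith
          moreover have "\<Union>(A' ` K) = \<Union>(A ` K) - {x}" unfolding A'_def by auto
          ultimately show ?thesis by simp
        qed
      qed
      obtain f2 where f2: "inj_on f2 (I - {i0})" "\<forall>i\<in>I - {i0}. f2 i \<in> A' i"
        using less(1)[of "I - {i0}" A', OF cI'] fin finA H' unfolding A'_def by auto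
      define f where "f = f2(i0 := x)"
      have "inj_on f (insert i0 (I - {i0}))"
        unfolding f_def using f2 A'_def by (auto simp: inj_on_def)
      then have "inj_on f I" using i0 by (simp add: insert_absorb)
      moreover have "\<forall>i\<in>I. f i \<in> A i" using f2 x unfolding f_def A'_def by auto
      ultimately show ?thesis by blast
    qed
  qed
qed


lemma sym_inner:
  fixes A :: "real^'n^'n"
  assumes "transpose A = A"
  shows "x \<bullet> (A *v y) = (A *v x) \<bullet> y"
proof -
  have "x \<bullet> (A *v y) = (x v* A) \<bullet> y" by (simp add: dot_lmul_matrix)
  also have "x v* A = transpose A *v x" by simp
  finally show ?thesis using assms by simp
qed

lemma eig_exists:
  fixes A :: "real^'n^'n"
  assumes symA: "transpose A = A" and U: "subspace U" and nz: "U \<noteq> {0}"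
    and inv: "\<forall>x\<in>U. A *v x \<in> U"
  shows "\<exists>x\<in>U. x \<noteq> 0 \<and> (\<exists>\<mu>. A *v x = \<mu> *\<^sub>R x)"
proof -
  define S where "S = sphere 0 1 \<inter> U"
  have "compact S" unfolding S_def using U by (intro compact_Int_closed compact_sphere closed_subspace)
  obtain z where z: "z \<in> U" "z \<noteq> 0" using nz U subspace_0 by blast
  have "z /\<^sub>R norm z \<in> S" unfolding S_def using z U by (auto simp: subspace_scale)
  then have "S \<noteq> {}" by blast
  have "continuous_on S (\<lambda>x. x \<bullet> (A *v x))"
    by (intro continuous_intros linear_continuous_on) (auto simp: matrix_vector_mul_linear)
  then obtain x0 where x0: "x0 \<in> S" and mx: "\<forall>y\<in>S. y \<bullet> (A *v y) \<le> x0 \<bullet> (A *v x0)"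
    using continuous_attains_sup[OF \<open>compact S\<close> \<open>S \<noteq> {}\<close>] by blast
  define l where "l = x0 \<bullet> (A *v x0)"
  define B where "B = l *\<^sub>R mat 1 - A"
  have symB: "transpose B = B" unfolding B_def using symA
    by (simp add: transpose_def vec_eq_iff mat_def)
  have Bv: "B *v z = l *\<^sub>R z - A *v z" for z
    unfolding B_def by (simp add: matrix_vector_mult_diff_rdistrib flip: scaleR_matrix_vector_assoc)
  have x0U: "x0 \<in> U" and nx0: "norm x0 = 1" using x0 unfolding S_def by auto
  have x0x0: "x0 \<bullet> x0 = 1" using nx0 by (simp add: norm_eq_1)
  have psd: "z \<bullet> (B *v z) \<ge> 0" if zU: "z \<in> U" for z
  proof (cases "z = 0")
    case True then show ?thesis by simp
  next
    case False
    define z' where "z' = z /\<^sub>R norm z"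
    have "z' \<in> S" unfolding S_def z'_def using zU False U by (auto simp: subspace_scale)
    then have "z' \<bullet> (A *v z') \<le> l" using mx l_def by auto
    moreover have "z' \<bullet> (A *v z') = (z \<bullet> (A *v z)) / (norm z)^2"
      unfolding z'_def by (simp add: matrix_vector_mult_scaleR power2_eq_square field_simps)
    ultimately have "z \<bullet> (A *v z) \<le> l * (norm z)^2" using False
      by (simp add: divide_le_eq)
    then show ?thesis by (simp add: Bv inner_diff_right power2_norm_eq_inner)
  qed
  have BU: "B *v z \<in> U" if "z \<in> U" for z
    using that inv U by (simp add: Bv subspace_diff subspace_scale)
  define y where "y = B *v x0"
  have yU: "y \<in> U" using BU x0U y_def by simp
  define c where "c = y \<bullet> y"
  define d where "d = y \<bullet> (B *v y)"
  have d0: "d \<ge> 0" using psd yU d_def by simp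
  have quad: "0 \<le> 2 * t * c + t^2 * d" for t
  proof -
    have "x0 + t *\<^sub>R y \<in> U" using x0U yU U by (simp add: subspace_add subspace_scale)
    then have "0 \<le> (x0 + t *\<^sub>R y) \<bullet> (B *v (x0 + t *\<^sub>R y))" using psd by blast
    also have "\<dots> = x0 \<bullet> (B *v x0) + t * (x0 \<bullet> (B *v y)) + t * (y \<bullet> (B *v x0)) + t^2 * d"
      by (simp add: d_def matrix_vector_right_distrib matrix_vector_mult_scaleR inner_add_left
          inner_add_right power2_eq_square algebra_simps)
    also have "x0 \<bullet> (B *v x0) = 0" using x0x0 by (simp add: Bv inner_diff_right l_def)
    also have "x0 \<bullet> (B *v y) = c" using sym_inner[OF symB, of x0 y] by (simp add: c_def y_def inner_commute)
    also have "y \<bullet> (B *v x0) = c" by (simp add: c_def y_def)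
    finally show ?thesis by (simp add: algebra_simps)
  qed
  have "c = 0"
  proof (rule ccontr)
    assume "c \<noteq> 0"
    define s where "s = 1 / (d + 1)"
    have s0: "s > 0" using d0 by (simp add: s_def)
    have sd: "s * d < 1" using d0 by (simp add: s_def field_simps)
    have eq: "2 * (- c * s) * c + (- c * s)^2 * d = c^2 * (s * (s * d - 2))"
      by (simp add: power2_eq_square algebra_simps)
    have "c^2 > 0" using \<open>c \<noteq> 0\<close> by simp
    moreover have "s * (s * d - 2) < 0" using s0 sd by (simp add: mult_pos_neg)
    ultimately have "c^2 * (s * (s * d - 2)) < 0" by (simp add: mult_pos_neg)
    then show False using quad[of "- c * s"] eq by linarith
  qed
  then have "y = 0" by (simp add: c_def)
  then have "A *v x0 = l *\<^sub>R x0" by (simp add: y_def Bv)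
  moreover have "x0 \<noteq> 0" using nx0 by auto
  ultimately show ?thesis using x0U by blast
qed

lemma eigspace_subspace:
  fixes A :: "real^'n^'n"
  assumes "subspace U"
  shows "subspace {x \<in> U. A *v x = \<mu> *\<^sub>R x}"
  using assms unfolding subspace_def
  by (auto simp: matrix_vector_right_distrib matrix_vector_mult_scaleR algebra_simps)

lemma common_eig:
  fixes M :: "(real^'n^'n) set"
  assumes "finite M" "\<forall>A\<in>M. transpose A = A" "\<forall>A\<in>M. \<forall>B\<in>M. A ** B = B ** A"
    "subspace U" "U \<noteq> {0}" "\<forall>A\<in>M. \<forall>x\<in>U. A *v x \<in> U"
  shows "\<exists>x\<in>U. x \<noteq> 0 \<and> (\<forall>A\<in>M. \<exists>\<mu>. A *v x = \<mu> *\<^sub>R x)"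
  using assms
proof (induction M arbitrary: U rule: finite_induct)
  case empty
  then obtain x where "x \<in> U" "x \<noteq> 0" using subspace_0 by blast
  then show ?case by auto
next
  case (insert A M U)
  obtain x0 \<mu> where x0: "x0 \<in> U" "x0 \<noteq> 0" "A *v x0 = \<mu> *\<^sub>R x0"
    using eig_exists[of A U] insert.prems by auto
  define U' where "U' = {x \<in> U. A *v x = \<mu> *\<^sub>R x}"
  have sU': "subspace U'" unfolding U'_def using eigspace_subspace insert.prems(3) by blast
  have nU': "U' \<noteq> {0}" using x0 unfolding U'_def by auto
  have invU': "\<forall>B\<in>M. \<forall>x\<in>U'. B *v x \<in> U'"
  proof (intro ballI)
    fix B x assume B: "B \<in> M" and x: "x \<in> U'"
    have "B *v x \<in> U" using insert.prems(5) B x unfolding U'_def by auto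
    moreover have "A *v (B *v x) = \<mu> *\<^sub>R (B *v x)"
    proof -
      have "A *v (B *v x) = (A ** B) *v x" by (simp add: matrix_vector_mul_assoc)
      also have "A ** B = B ** A" using insert.prems(2) B by blast
      also have "(B ** A) *v x = B *v (A *v x)" by (simp add: matrix_vector_mul_assoc)
      also have "A *v x = \<mu> *\<^sub>R x" using x unfolding U'_def by auto
      finally show ?thesis by (simp add: matrix_vector_mult_scaleR)
    qed
    ultimately show "B *v x \<in> U'" unfolding U'_def by auto
  qed
  have h1: "\<forall>A\<in>M. transpose A = A" using insert.prems(1) by blast
  have h2: "\<forall>A\<in>M. \<forall>B\<in>M. A ** B = B ** A" using insert.prems(2) by blast
  obtain x where x: "x \<in> U'" "x \<noteq> 0" "\<forall>B\<in>M. \<exists>\<mu>. B *v x = \<mu> *\<^sub>R x"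
    using insert.IH[OF h1 h2 sU' nU' invU'] by blast
  have "x \<in> U" "A *v x = \<mu> *\<^sub>R x" using x(1) unfolding U'_def by auto
  then show ?case using x(2,3) by (intro bexI[of _ x]) auto
qed

lemma onb_exists:
  fixes M :: "(real^'n^'n) set"
  assumes M: "finite M" "\<forall>A\<in>M. transpose A = A" "\<forall>A\<in>M. \<forall>B\<in>M. A ** B = B ** A"
  shows "subspace U \<Longrightarrow> (\<forall>A\<in>M. \<forall>x\<in>U. A *v x \<in> U) \<Longrightarrow>
    \<exists>Bs. Bs \<subseteq> U \<and> (\<forall>x\<in>Bs. norm x = 1 \<and> (\<forall>A\<in>M. \<exists>\<mu>. A *v x = \<mu> *\<^sub>R x)) \<and>
      (\<forall>x\<in>Bs. \<forall>y\<in>Bs. x \<noteq> y \<longrightarrow> x \<bullet> y = 0) \<and> span Bs = U"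
proof (induction "dim U" arbitrary: U rule: less_induct)
  case less
  show ?case
  proof (cases "U = {0}")
    case True then show ?thesis by (intro exI[of _ "{}"]) auto
  next
    case False
    obtain x where x: "x \<in> U" "x \<noteq> 0" "\<forall>A\<in>M. \<exists>\<mu>. A *v x = \<mu> *\<^sub>R x"
      using common_eig[OF M less.prems(1) False less.prems(2)] by blast
    define x1 where "x1 = x /\<^sub>R norm x"
    have x1U: "x1 \<in> U" using x less.prems(1) by (simp add: x1_def subspace_scale)
    have nx1: "norm x1 = 1" using x by (simp add: x1_def)
    have x1x1: "x1 \<bullet> x1 = 1" using nx1 by (simp add: norm_eq_1)
    have ex1: "\<forall>A\<in>M. \<exists>\<mu>. A *v x1 = \<mu> *\<^sub>R x1"
    proof
      fix A assume "A \<in> M"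
      then obtain \<mu> where "A *v x = \<mu> *\<^sub>R x" using x by blast
      then have "A *v x1 = \<mu> *\<^sub>R x1" by (simp add: x1_def matrix_vector_mult_scaleR)
      then show "\<exists>\<mu>. A *v x1 = \<mu> *\<^sub>R x1" by blast
    qed
    define U' where "U' = {y \<in> U. x1 \<bullet> y = 0}"
    have sU': "subspace U'" using less.prems(1) unfolding U'_def subspace_def
      by (auto simp: inner_add_right)
    have invU': "\<forall>A\<in>M. \<forall>y\<in>U'. A *v y \<in> U'"
    proof (intro ballI)
      fix A y assume A: "A \<in> M" and y: "y \<in> U'"
      obtain \<mu> where mu: "A *v x1 = \<mu> *\<^sub>R x1" using ex1 A by blast
      have "x1 \<bullet> (A *v y) = (A *v x1) \<bullet> y" using sym_inner M(2) A by blast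
      also have "\<dots> = 0" using y mu unfolding U'_def by simp
      finally show "A *v y \<in> U'" using less.prems(2) A y unfolding U'_def by auto
    qed
    have "x1 \<notin> U'" using x1x1 unfolding U'_def by auto
    then have "U' \<subset> U" using x1U unfolding U'_def by blast
    moreover have "span U' = U'" "span U = U" using sU' less.prems(1) span_eq_iff by blast+
    ultimately have "span U' \<subset> span U" by (simp del: span_eq_iff)
    then have "dim U' < dim U" using dim_psubset by blast
    then obtain Bs where Bs: "Bs \<subseteq> U'" "\<forall>x\<in>Bs. norm x = 1 \<and> (\<forall>A\<in>M. \<exists>\<mu>. A *v x = \<mu> *\<^sub>R x)"
      "\<forall>x\<in>Bs. \<forall>y\<in>Bs. x \<noteq> y \<longrightarrow> x \<bullet> y = 0" "span Bs = U'"
      using less.hyps[of U'] sU' invU' by blast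
    have x1nB: "x1 \<notin> Bs" using Bs(1) x1x1 unfolding U'_def by auto
    have "span (insert x1 Bs) = U"
    proof
      show "span (insert x1 Bs) \<subseteq> U" using Bs(1) x1U less.prems(1) unfolding U'_def
        by (intro span_minimal) auto
      show "U \<subseteq> span (insert x1 Bs)"
      proof
        fix y assume y: "y \<in> U"
        have "y - (x1 \<bullet> y) *\<^sub>R x1 \<in> U'" unfolding U'_def using y x1U less.prems(1) x1x1
          by (auto simp: inner_diff_right subspace_diff subspace_scale)
        then have "y - (x1 \<bullet> y) *\<^sub>R x1 \<in> span (insert x1 Bs)" using Bs(4)
          by (metis span_mono subset_insertI subsetD)
        moreover have "(x1 \<bullet> y) *\<^sub>R x1 \<in> span (insert x1 Bs)" by (simp add: span_base span_scale)
        ultimately have "(y - (x1 \<bullet> y) *\<^sub>R x1) + (x1 \<bullet> y) *\<^sub>R x1 \<in> span (insert x1 Bs)"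
          by (rule span_add)
        then show "y \<in> span (insert x1 Bs)" by simp
      qed
    qed
    moreover have "\<forall>a\<in>insert x1 Bs. \<forall>b\<in>insert x1 Bs. a \<noteq> b \<longrightarrow> a \<bullet> b = 0"
      using Bs(1,3) unfolding U'_def by (auto simp: inner_commute)
    moreover have "insert x1 Bs \<subseteq> U" using Bs(1) x1U unfolding U'_def by auto
    ultimately show ?thesis using Bs(2) nx1 ex1 by (intro exI[of _ "insert x1 Bs"]) auto
  qed
qed


definition outer :: "real^'n \<Rightarrow> real^'n \<Rightarrow> real^'n^'n" where
  "outer x y = (\<chi> p q. x$p * y$q)"

definition sym2 :: "real^'n \<Rightarrow> real^'n \<Rightarrow> real^'n^'n" where
  "sym2 x y = outer x y + outer y x"

lemma transpose_add': "transpose (A + B) = transpose A + (transpose B :: real^'n^'n)"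
  by (simp add: transpose_def vec_eq_iff)

lemma transpose_zero': "transpose (0 :: real^'n^'n) = 0"
  by (simp add: transpose_def vec_eq_iff)

lemma matrix_add_rdistrib': "(A + B) ** (C :: real^'n^'n) = A ** C + B ** C"
  by (simp add: matrix_matrix_mult_def vec_eq_iff sum.distrib algebra_simps)

lemma trace_scaleR': "trace (c *\<^sub>R (A :: real^'n^'n)) = c * trace A"
  by (simp add: trace_def sum_distrib_left)

lemma transpose_outer: "transpose (outer x y) = outer y x"
  by (simp add: transpose_def outer_def vec_eq_iff)

lemma trace_outer: "trace (outer x y) = x \<bullet> y"
  by (simp add: trace_def outer_def inner_vec_def)

lemma inner_outer_outer: "outer x y \<bullet> outer z t = (x \<bullet> z) * (y \<bullet> t)"
proof -
  have "outer x y \<bullet> outer z t = (\<Sum>p\<in>UNIV. \<Sum>q\<in>UNIV. (x$p * z$p) * (y$q * t$q))"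
    by (simp add: inner_vec_def outer_def algebra_simps)
  also have "\<dots> = (\<Sum>p\<in>UNIV. x$p * z$p) * (\<Sum>q\<in>UNIV. y$q * t$q)"
    by (simp add: sum_product)
  finally show ?thesis by (simp add: inner_vec_def)
qed

lemma inner_outer_mat: "outer x y \<bullet> Z = x \<bullet> (Z *v y)"
proof -
  have "outer x y \<bullet> Z = (\<Sum>p\<in>UNIV. \<Sum>q\<in>UNIV. x$p * (Z$p$q * y$q))"
    by (simp add: inner_vec_def outer_def algebra_simps)
  also have "\<dots> = (\<Sum>p\<in>UNIV. x$p * (\<Sum>q\<in>UNIV. Z$p$q * y$q))"
    by (simp add: sum_distrib_left)
  finally show ?thesis by (simp add: inner_vec_def matrix_vector_mult_def)
qed

lemma transpose_sym2: "transpose (sym2 x y) = sym2 x y"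
  by (simp add: sym2_def transpose_add' transpose_outer)

lemma trace_sym2: "trace (sym2 x y) = 2 * (x \<bullet> y)"
  by (simp add: sym2_def trace_add trace_outer inner_commute)

lemma inner_sym2: "sym2 x y \<bullet> sym2 z t = 2 * ((x \<bullet> z) * (y \<bullet> t)) + 2 * ((x \<bullet> t) * (y \<bullet> z))"
  by (simp add: sym2_def inner_add_left inner_add_right inner_outer_outer inner_commute algebra_simps)

lemma inner_sym2_mat: "sym2 x y \<bullet> Z = x \<bullet> (Z *v y) + y \<bullet> (Z *v x)"
  by (simp add: sym2_def inner_add_left inner_outer_mat)

lemma orth_comm:
  fixes V Z :: "real^'n^'n"
  assumes "transpose V = V" "Z ** V = V ** Z" "V *v x = \<alpha> *\<^sub>R x" "V *v y = \<beta> *\<^sub>R y" "\<alpha> \<noteq> \<beta>"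
  shows "x \<bullet> (Z *v y) = 0"
proof -
  have "V *v (Z *v y) = \<beta> *\<^sub>R (Z *v y)"
  proof -
    have "V *v (Z *v y) = (V ** Z) *v y" by (simp add: matrix_vector_mul_assoc)
    also have "\<dots> = (Z ** V) *v y" using assms(2) by simp
    also have "\<dots> = Z *v (V *v y)" by (simp add: matrix_vector_mul_assoc)
    finally show ?thesis using assms(4) by (simp add: matrix_vector_mult_scaleR)
  qed
  then have "\<beta> * (x \<bullet> (Z *v y)) = x \<bullet> (V *v (Z *v y))" by simp
  also have "\<dots> = (V *v x) \<bullet> (Z *v y)" using sym_inner[OF assms(1)] by blast
  also have "\<dots> = \<alpha> * (x \<bullet> (Z *v y))" using assms(3) by simp
  finally show ?thesis using assms(5) by simp
qed

lemma subspace_tangent_p: "subspace (tangent_p :: (real^'n^'n) set)"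
  unfolding subspace_def tangent_p_def
  by (auto simp: transpose_add' trace_add transpose_scalar trace_scaleR' transpose_zero' trace_0[simplified])

lemma subspace_comm: "subspace {Z :: real^'n^'n. Z ** V = V ** Z}"
  unfolding subspace_def
  by (auto simp: matrix_add_ldistrib matrix_scalar_ac scalar_matrix_assoc[symmetric]
      matrix_add_rdistrib')

lemma subspace_orth: "subspace {Y :: real^'n^'n. Y \<bullet> Z = 0}"
  unfolding subspace_def by (auto simp: inner_add_left)

lemma Ad_comm:
  fixes k V X :: "real^'n^'n"
  assumes k: "rotation_matrix k" and kv: "Ad k V = V" and X: "X ** V = V ** X"
  shows "Ad k X ** V = V ** Ad k X"
proof -
  have o1: "transpose k ** k = mat 1" and o2: "k ** transpose k = mat 1"
    using k by (auto simp: rotation_matrix_def orthogonal_matrix_def)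
  have kv': "k ** V ** transpose k = V" using kv by (simp add: Ad_def)
  have a: "V ** k = k ** V"
  proof -
    have "V ** k = (k ** V ** transpose k) ** k" using kv' by simp
    also have "\<dots> = k ** V ** (transpose k ** k)" by (simp add: matrix_mul_assoc)
    finally show ?thesis using o1 by simp
  qed
  have b: "transpose k ** V = V ** transpose k"
  proof -
    have "transpose k ** V = transpose k ** (k ** V ** transpose k)" using kv' by simp
    also have "\<dots> = (transpose k ** k) ** V ** transpose k" by (simp add: matrix_mul_assoc)
    finally show ?thesis using o1 by simp
  qed
  have "Ad k X ** V = k ** X ** (transpose k ** V)" by (simp add: Ad_def matrix_mul_assoc)
  also have "\<dots> = k ** (X ** V) ** transpose k" using b by (simp add: matrix_mul_assoc)
  also have "\<dots> = (k ** V) ** X ** transpose k" using X by (simp add: matrix_mul_assoc)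
  also have "\<dots> = V ** Ad k X" using a by (simp add: Ad_def matrix_mul_assoc)
  finally show ?thesis .
qed


lemma eigenbasis:
  fixes M :: "(real^'n^'n) set"
  assumes M: "finite M" "\<forall>A\<in>M. transpose A = A" "\<forall>A\<in>M. \<forall>B\<in>M. A ** B = B ** A"
  shows "\<exists>u::'n \<Rightarrow> real^'n. (\<forall>a b. u a \<bullet> u b = (if a = b then 1 else 0)) \<and> span (range u) = UNIV \<and>
           (\<forall>A\<in>M. \<forall>a. A *v u a = (u a \<bullet> (A *v u a)) *\<^sub>R u a)"
proof -
  obtain Bs where Bs: "(\<forall>x\<in>Bs. norm x = 1 \<and> (\<forall>A\<in>M. \<exists>\<mu>. A *v x = \<mu> *\<^sub>R x))"
      "(\<forall>x\<in>Bs. \<forall>y\<in>Bs. x \<noteq> y \<longrightarrow> x \<bullet> y = 0)" "span Bs = UNIV"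
    using onb_exists[OF M, of UNIV] by auto
  have "0 \<notin> Bs" using Bs(1) by force
  moreover have "pairwise orthogonal Bs" using Bs(2) unfolding pairwise_def orthogonal_def by blast
  ultimately have ind: "independent Bs" using pairwise_orthogonal_independent by blast
  then have fin: "finite Bs" using finiteI_independent by blast
  have "card Bs = dim (span Bs)" using dim_span_eq_card_independent[OF ind] by simp
  also have "\<dots> = CARD('n)" using Bs(3) by simp
  finally have cB: "card Bs = card (UNIV :: 'n set)" by simp
  obtain u where bij: "bij_betw u (UNIV :: 'n set) Bs"
    using finite_same_card_bij[OF finite fin cB[symmetric]] by blast
  then have ru: "range u = Bs" and iu: "inj u" by (auto simp: bij_betw_def)
  have uo: "\<forall>a b. u a \<bullet> u b = (if a = b then 1 else 0)"
  proof (intro allI)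
    fix a b
    show "u a \<bullet> u b = (if a = b then 1 else 0)"
    proof (cases "a = b")
      case True
      have "norm (u a) = 1" using Bs(1) ru by auto
      then show ?thesis using True by (simp add: norm_eq_1)
    next
      case False
      then have "u a \<noteq> u b" using iu by (auto dest: injD)
      then show ?thesis using Bs(2) ru False by auto
    qed
  qed
  have ue: "\<forall>A\<in>M. \<forall>a. A *v u a = (u a \<bullet> (A *v u a)) *\<^sub>R u a"
  proof (intro ballI allI)
    fix A a assume A: "A \<in> M"
    obtain \<mu> where mu: "A *v u a = \<mu> *\<^sub>R u a" using Bs(1) ru A by blast
    have "u a \<bullet> (A *v u a) = \<mu>" using uo mu by simp
    then show "A *v u a = (u a \<bullet> (A *v u a)) *\<^sub>R u a" using mu by simp
  qed
  show ?thesis using uo ue Bs(3) ru by blast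
qed

lemma hall_count:
  fixes lam :: "nat \<Rightarrow> 'n::finite \<Rightarrow> real" and idx :: "'n \<Rightarrow> nat"
  assumes N: "CARD('n) \<ge> 6" and inj: "inj idx"
    and deg: "\<forall>S\<subseteq>{..<r}. \<forall>a. card S \<le> card {b. \<exists>i\<in>S. lam i b \<noteq> lam i a}"
    and T: "T \<subseteq> {..<r} \<times> {..<3::nat}"
  shows "card T \<le> card (\<Union>t\<in>T. {(a,b). idx a < idx b \<and> lam (fst t) a \<noteq> lam (fst t) b})"
proof -
  define S where "S = fst ` T"
  have S: "S \<subseteq> {..<r}" using T unfolding S_def by auto
  have fS: "finite S" using S finite_subset by blast
  have "T \<subseteq> S \<times> {..<3}" using T unfolding S_def by force
  then have "card T \<le> card (S \<times> {..<3::nat})" using fS by (intro card_mono) auto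
  then have cT: "card T \<le> 3 * card S" by (simp add: card_cartesian_product)
  define Q1 where "Q1 = {(a,b). idx a < idx b \<and> (\<exists>i\<in>S. lam i a \<noteq> lam i b)}"
  have Q1eq: "(\<Union>t\<in>T. {(a,b). idx a < idx b \<and> lam (fst t) a \<noteq> lam (fst t) b}) = Q1"
    unfolding Q1_def S_def by auto
  define D where "D a = {b. \<exists>i\<in>S. lam i b \<noteq> lam i a}" for a
  define Q where "Q = Sigma UNIV D"
  have "card Q = (\<Sum>a\<in>UNIV. card (D a))" unfolding Q_def by (simp add: card_SigmaI)
  also have "\<dots> \<ge> (\<Sum>a\<in>(UNIV::'n set). card S)"
    using deg S unfolding D_def by (intro sum_mono) auto
  finally have cQ: "card Q \<ge> CARD('n) * card S" by simp
  have "Q \<subseteq> Q1 \<union> prod.swap ` Q1"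
  proof
    fix p assume "p \<in> Q"
    then obtain a b where p: "p = (a,b)" and i: "\<exists>i\<in>S. lam i b \<noteq> lam i a"
      unfolding Q_def D_def by auto
    then have "a \<noteq> b" by auto
    then have "idx a \<noteq> idx b" using inj by (auto dest: injD)
    then consider "idx a < idx b" | "idx b < idx a" by linarith
    then show "p \<in> Q1 \<union> prod.swap ` Q1"
    proof cases
      case 1
      have "\<exists>i\<in>S. lam i a \<noteq> lam i b" using i by metis
      then show ?thesis using 1 p unfolding Q1_def by auto
    next
      case 2
      then have "(b,a) \<in> Q1" using i unfolding Q1_def by blast
      then have "prod.swap (b,a) \<in> prod.swap ` Q1" by blast
      then show ?thesis using p by simp
    qed
  qed
  then have "card Q \<le> card (Q1 \<union> prod.swap ` Q1)" by (intro card_mono) auto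
  also have "\<dots> \<le> card Q1 + card (prod.swap ` Q1)" by (rule card_Un_le)
  also have "\<dots> \<le> card Q1 + card Q1" using card_image_le[of Q1 prod.swap] by simp
  finally have "CARD('n) * card S \<le> 2 * card Q1" using cQ by linarith
  moreover have "6 * card S \<le> CARD('n) * card S" using N by simp
  ultimately have "3 * card S \<le> card Q1" by linarith
  then have "card T \<le> card Q1" using cT by linarith
  then show ?thesis by (subst Q1eq)
qed


lemma diag_entry: "(X :: real^'n^'n) $ k $ k = (X *v axis k 1) $ k"
  by (simp add: matrix_vector_mult_def axis_def if_distrib cong: if_cong)

lemma deg_bound:
  fixes F :: "(real^'n^'n) set" and v :: "nat \<Rightarrow> real^'n^'n" and u :: "'n \<Rightarrow> real^'n"
  assumes Ft: "F \<subseteq> tangent_p" and sp: "span (v ` {..<r}) = F"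
    and inj: "inj_on v {..<r}" and ind: "independent (v ` {..<r})"
    and uo: "\<forall>a b. u a \<bullet> u b = (if a = b then 1 else 0)" and us: "span (range u) = UNIV"
    and ue: "\<forall>i<r. \<forall>a. v i *v u a = (u a \<bullet> (v i *v u a)) *\<^sub>R u a"
    and S: "S \<subseteq> {..<r}"
  shows "card S \<le> card {b. \<exists>i\<in>S. u b \<bullet> (v i *v u b) \<noteq> u a \<bullet> (v i *v u a)}"
proof -
  define D where "D = {b. \<exists>i\<in>S. u b \<bullet> (v i *v u b) \<noteq> u a \<bullet> (v i *v u a)}"
  define V where "V = span (v ` S)"
  have "v ` S \<subseteq> v ` {..<r}" using S by (rule image_mono)
  then have indS: "independent (v ` S)" using independent_mono[OF ind] by blast
  have "dim V = card (v ` S)" unfolding V_def using dim_span_eq_card_independent[OF indS] .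
  also have "\<dots> = card S" using inj S by (intro card_image) (auto intro: inj_on_subset)
  finally have dimV: "dim V = card S" .
  have VF: "V \<subseteq> F" unfolding V_def using sp S by (metis image_mono span_mono)
  define P where "P = {X :: real^'n^'n. \<forall>b. X *v u b = (u b \<bullet> (X *v u b)) *\<^sub>R u b}"
  have sP: "subspace P" unfolding subspace_def P_def
    by (auto simp: matrix_vector_mult_add_rdistrib inner_add_right scaleR_add_left simp flip: scaleR_matrix_vector_assoc) (metis scaleR_scaleR)
  have FP: "F \<subseteq> P"
  proof -
    have "v ` {..<r} \<subseteq> P" using ue unfolding P_def by auto
    then show ?thesis using sp span_minimal[OF _ sP] by blast
  qed
  define L where "L X = (\<chi> b. u b \<bullet> (X *v u b) - u a \<bullet> (X *v u a))" for X :: "real^'n^'n"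
  have lin: "linear L"
    by (rule linearI) (simp_all add: L_def vec_eq_iff matrix_vector_mult_add_rdistrib inner_add_right algebra_simps flip: scaleR_matrix_vector_assoc)
  have zero: "X = 0" if X: "X \<in> V" and LX: "L X = 0" for X
  proof -
    define \<mu> where "\<mu> = u a \<bullet> (X *v u a)"
    have XP: "X \<in> P" and XT: "X \<in> tangent_p" using X VF FP Ft by auto
    have eb: "X *v u b = \<mu> *\<^sub>R u b" for b
    proof -
      have "(L X) $ b = 0" using LX by simp
      then have e1: "u b \<bullet> (X *v u b) = \<mu>" by (simp add: L_def \<mu>_def)
      have "X *v u b = (u b \<bullet> (X *v u b)) *\<^sub>R u b" using XP unfolding P_def by blast
      then show ?thesis using e1 by simp
    qed
    define R where "R = {y. X *v y = \<mu> *\<^sub>R y}"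
    have sR: "subspace R" unfolding subspace_def R_def
      by (auto simp: matrix_vector_right_distrib matrix_vector_mult_scaleR algebra_simps)
    have "range u \<subseteq> R" using eb unfolding R_def by auto
    then have "span (range u) \<subseteq> R" using span_minimal[OF _ sR] by blast
    then have all: "X *v y = \<mu> *\<^sub>R y" for y using us unfolding R_def by auto
    have "trace X = (\<Sum>k\<in>UNIV. X $ k $ k)" by (simp add: trace_def)
    also have "\<dots> = (\<Sum>k\<in>(UNIV::'n set). \<mu>)"
      by (intro sum.cong refl) (simp add: diag_entry all)
    finally have "trace X = \<mu> * CARD('n)" by simp
    moreover have "trace X = 0" using XT by (simp add: tangent_p_def)
    ultimately have "\<mu> = 0" by simp
    then have "\<forall>y. X *v y = 0 *v y" using all by simp
    then show "X = 0" using matrix_eq by blast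
  qed
  have sV: "subspace V" unfolding V_def by simp
  have injL: "inj_on L V" using linear_inj_on_iff_eq_0[OF lin sV] zero by blast
  have "dim (L ` V) = dim V"
    using dim_image_eq[OF lin, of V] injL unfolding V_def by (simp add: span_span)
  then have dimL: "dim (L ` V) = card S" using dimV by simp
  have sub: "L ` V \<subseteq> span ((\<lambda>b. axis b 1) ` D)"
  proof
    fix Y assume "Y \<in> L ` V"
    then obtain X where X: "X \<in> V" and Y: "Y = L X" by blast
    have Yz: "Y $ b = 0" if b: "b \<notin> D" for b
    proof -
      define Qb where "Qb = {Z :: real^'n^'n. u b \<bullet> (Z *v u b) = u a \<bullet> (Z *v u a)}"
      have sQ: "subspace Qb" unfolding subspace_def Qb_def
        by (auto simp: matrix_vector_mult_add_rdistrib inner_add_right simp flip: scaleR_matrix_vector_assoc)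
      have "v ` S \<subseteq> Qb" using b unfolding D_def Qb_def by auto
      then have "V \<subseteq> Qb" unfolding V_def using span_minimal[OF _ sQ] by blast
      then show ?thesis using X unfolding Y L_def Qb_def by auto
    qed
    have "Y = (\<Sum>b\<in>UNIV. Y $ b *s axis b 1)" by (simp add: basis_expansion)
    also have "\<dots> = (\<Sum>b\<in>D. Y $ b *s axis b 1)"
      using Yz by (intro sum.mono_neutral_right) auto
    also have "\<dots> \<in> span ((\<lambda>b. axis b 1) ` D)"
      by (intro span_sum) (simp add: scalar_mult_eq_scaleR span_base span_scale)
    finally show "Y \<in> span ((\<lambda>b. axis b 1) ` D)" .
  qed
  have "dim (L ` V) \<le> card ((\<lambda>b. axis b 1 :: real^'n) ` D)" using sub by (intro dim_le_card) auto
  also have "\<dots> \<le> card D" by (rule card_image_le) auto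
  finally show ?thesis using dimL unfolding D_def by simp
qed


lemma main_construction:
  fixes F :: "(real^'n^'n) set" and v :: "nat \<Rightarrow> real^'n^'n"
  assumes N6: "CARD('n) \<ge> 6" and ab: "abelian_subspace F"
    and vF: "\<forall>i<r. v i \<in> F" and inj: "inj_on v {..<r}" and ind: "independent (v ` {..<r})"
    and sp: "span (v ` {..<r}) = F"
  shows "\<exists>w :: nat \<Rightarrow> nat \<Rightarrow> real^'n^'n.
             (\<forall>i<r. \<forall>j<3. w i j \<in> tangent_p \<and> norm (w i j) = 1) \<and>
             (\<forall>i<r. \<forall>j<3. \<forall>i'<r. \<forall>j'<3. (i, j) \<noteq> (i', j') \<longrightarrow> w i j \<bullet> w i' j' = 0) \<and>
             (\<forall>i<r. span {w i 0, w i 1, w i 2} \<subseteq>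
                orth_in_tangent (span (\<Union>k\<in>stab_of (v i). Ad k ` F)))"
proof -
  have Ft: "F \<subseteq> tangent_p" and comm: "\<forall>X\<in>F. \<forall>Y\<in>F. X ** Y = Y ** X"
    using ab unfolding abelian_subspace_def by auto
  define M where "M = v ` {..<r}"
  have M: "finite M" "\<forall>A\<in>M. transpose A = A" "\<forall>A\<in>M. \<forall>B\<in>M. A ** B = B ** A"
    using vF Ft comm unfolding M_def tangent_p_def by auto
  obtain u :: "'n \<Rightarrow> real^'n" where uo: "\<forall>a b. u a \<bullet> u b = (if a = b then 1 else 0)"
      and us: "span (range u) = UNIV" and ueM: "\<forall>A\<in>M. \<forall>a. A *v u a = (u a \<bullet> (A *v u a)) *\<^sub>R u a"
    using eigenbasis[OF M] by blast
  have ue: "\<forall>i<r. \<forall>a. v i *v u a = (u a \<bullet> (v i *v u a)) *\<^sub>R u a" using ueM unfolding M_def by auto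
  define lam where "lam i a = u a \<bullet> (v i *v u a)" for i a
  have ue': "v i *v u a = lam i a *\<^sub>R u a" if "i < r" for i a using ue that unfolding lam_def by auto
  obtain idx :: "'n \<Rightarrow> nat" where idx: "inj idx"
    using finite_imp_inj_to_nat_seg[of "UNIV :: 'n set"] by auto
  have deg: "\<forall>S\<subseteq>{..<r}. \<forall>a. card S \<le> card {b. \<exists>i\<in>S. lam i b \<noteq> lam i a}"
    using deg_bound[OF Ft sp inj ind uo us ue] unfolding lam_def by blast
  define Sep where "Sep i = {(a,b). idx a < idx b \<and> lam i a \<noteq> lam i b}" for i
  define I where "I = {..<r} \<times> {..<3::nat}"
  have "\<exists>f. inj_on f I \<and> (\<forall>t\<in>I. f t \<in> Sep (fst t))"
  proof (rule hall)
    show "finite I" unfolding I_def by simp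
    show "\<forall>t\<in>I. finite (Sep (fst t))" by simp
    show "\<forall>J\<subseteq>I. card J \<le> card (\<Union>((\<lambda>t. Sep (fst t)) ` J))"
      using hall_count[OF N6 idx deg] unfolding I_def Sep_def by blast
  qed
  then obtain f where finj: "inj_on f I" and fS: "\<forall>t\<in>I. f t \<in> Sep (fst t)" by blast
  define W where "W p = (1 / sqrt 2) *\<^sub>R sym2 (u (fst p)) (u (snd p))" for p
  define w where "w i j = W (f (i,j))" for i j
  have fprop: "idx (fst (f (i,j))) < idx (snd (f (i,j))) \<and> lam i (fst (f (i,j))) \<noteq> lam i (snd (f (i,j)))"
    if "i < r" "j < 3" for i j
  proof -
    have "(i,j) \<in> I" using that unfolding I_def by auto
    then have "f (i,j) \<in> Sep i" using fS by fastforce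
    then show ?thesis unfolding Sep_def by (auto split: prod.splits)
  qed
  have Wt: "W p \<in> tangent_p \<and> norm (W p) = 1" if ne: "fst p \<noteq> snd p" for p
  proof -
    have "transpose (W p) = W p" by (simp add: W_def transpose_scalar transpose_sym2)
    moreover have "trace (W p) = 0" using ne uo by (simp add: W_def trace_scaleR' trace_sym2)
    moreover have "W p \<bullet> W p = 1"
    proof -
      have "W p \<bullet> W p = (1 / sqrt 2) * (1 / sqrt 2) * (sym2 (u (fst p)) (u (snd p)) \<bullet> sym2 (u (fst p)) (u (snd p)))"
        by (simp add: W_def)
      also have "\<dots> = 1" using ne uo by (simp add: inner_sym2)
      finally show ?thesis .
    qed
    ultimately show ?thesis by (simp add: tangent_p_def norm_eq_sqrt_inner)
  qed
  have Worth: "W p \<bullet> W q = 0" if pq: "p \<noteq> q" "idx (fst p) < idx (snd p)" "idx (fst q) < idx (snd q)" for p q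
  proof -
    obtain a b c d where p: "p = (a,b)" and q: "q = (c,d)" by (cases p, cases q) auto
    have "W p \<bullet> W q = (1 / sqrt 2) * (1 / sqrt 2) * (2 * ((u a \<bullet> u c) * (u b \<bullet> u d)) + 2 * ((u a \<bullet> u d) * (u b \<bullet> u c)))"
      by (simp add: W_def p q inner_sym2)
    also have "(u a \<bullet> u c) * (u b \<bullet> u d) = 0" using pq(1) uo p q by auto
    also have "(u a \<bullet> u d) * (u b \<bullet> u c) = 0" using pq(2,3) uo p q by auto
    finally show ?thesis by simp
  qed
  have Wperp: "w i j \<bullet> Z = 0" if ij: "i < r" "j < 3" and Z: "Z ** v i = v i ** Z" for i j Z
  proof -
    obtain a b where ab: "f (i,j) = (a,b)" by (cases "f (i,j)") auto
    have l: "lam i a \<noteq> lam i b" using fprop[OF ij] ab by simp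
    have symv: "transpose (v i) = v i" using vF Ft ij unfolding tangent_p_def by auto
    have "u a \<bullet> (Z *v u b) = 0" using orth_comm[OF symv Z ue'[OF ij(1)] ue'[OF ij(1)] l] .
    moreover have "u b \<bullet> (Z *v u a) = 0" using orth_comm[OF symv Z ue'[OF ij(1)] ue'[OF ij(1)]] l by auto
    ultimately show ?thesis by (simp add: w_def W_def ab inner_sym2_mat)
  qed
  have P1: "\<forall>i<r. \<forall>j<3. w i j \<in> tangent_p \<and> norm (w i j) = 1"
  proof (intro allI impI)
    fix i j :: nat assume ij: "i < r" "j < 3"
    have "fst (f (i,j)) \<noteq> snd (f (i,j))" using fprop[OF ij] by auto
    then show "w i j \<in> tangent_p \<and> norm (w i j) = 1" using Wt unfolding w_def by blast
  qed
  have P2: "\<forall>i<r. \<forall>j<3. \<forall>i'<r. \<forall>j'<3. (i, j) \<noteq> (i', j') \<longrightarrow> w i j \<bullet> w i' j' = 0"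
  proof (intro allI impI)
    fix i j i' j' :: nat assume h: "i < r" "j < 3" "i' < r" "j' < 3" "(i, j) \<noteq> (i', j')"
    have "(i,j) \<in> I" "(i',j') \<in> I" using h unfolding I_def by auto
    then have "f (i,j) \<noteq> f (i',j')" using finj h(5) by (auto dest: inj_onD)
    then show "w i j \<bullet> w i' j' = 0" unfolding w_def
      using Worth fprop[OF h(1,2)] fprop[OF h(3,4)] by blast
  qed
  have P3: "\<forall>i<r. span {w i 0, w i 1, w i 2} \<subseteq> orth_in_tangent (span (\<Union>k\<in>stab_of (v i). Ad k ` F))"
  proof (intro allI impI)
    fix i assume i: "i < r"
    define C where "C = {Z :: real^'n^'n. Z ** v i = v i ** Z}"
    have sC: "subspace C" unfolding C_def by (rule subspace_comm)
    have "(\<Union>k\<in>stab_of (v i). Ad k ` F) \<subseteq> C"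
    proof
      fix Z assume "Z \<in> (\<Union>k\<in>stab_of (v i). Ad k ` F)"
      then obtain k X where k: "k \<in> stab_of (v i)" and X: "X \<in> F" and Z: "Z = Ad k X" by blast
      have kr: "rotation_matrix k" and kv: "Ad k (v i) = v i" using k unfolding stab_of_def stabK_def by auto
      have "X ** v i = v i ** X" using comm X vF i by blast
      then show "Z \<in> C" unfolding C_def Z using Ad_comm[OF kr kv] by blast
    qed
    then have spC: "span (\<Union>k\<in>stab_of (v i). Ad k ` F) \<subseteq> C" using span_minimal[OF _ sC] by blast
    have wT: "{w i 0, w i 1, w i 2} \<subseteq> tangent_p" using P1 i by auto
    show "span {w i 0, w i 1, w i 2} \<subseteq> orth_in_tangent (span (\<Union>k\<in>stab_of (v i). Ad k ` F))"
    proof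
      fix Y assume Y: "Y \<in> span {w i 0, w i 1, w i 2}"
      have YT: "Y \<in> tangent_p" using Y span_minimal[OF wT subspace_tangent_p] by blast
      have "Y \<bullet> Z = 0" if Z: "Z \<in> span (\<Union>k\<in>stab_of (v i). Ad k ` F)" for Z
      proof -
        have ZC: "Z ** v i = v i ** Z" using Z spC unfolding C_def by blast
        have "{w i 0, w i 1, w i 2} \<subseteq> {Y. Y \<bullet> Z = 0}" using Wperp[OF i _ ZC] by auto
        then have "span {w i 0, w i 1, w i 2} \<subseteq> {Y. Y \<bullet> Z = 0}"
          using span_minimal[OF _ subspace_orth] by blast
        then show ?thesis using Y by blast
      qed
      then show "Y \<in> orth_in_tangent (span (\<Union>k\<in>stab_of (v i). Ad k ` F))"
        unfolding orth_in_tangent_def using YT by blast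
    qed
  qed
  show ?thesis using P1 P2 P3 by blast
qed

theorem proposition11p1:
  assumes "CARD('n::finite) \<ge> 6"
  shows "property_E_SL TYPE('n)"
  unfolding property_E_SL_def Let_def
proof (intro allI impI)
  fix F :: "(real^'n^'n) set" and v :: "nat \<Rightarrow> real^'n^'n"
  assume mF: "maximal_flat_tangent F"
  assume hv: "(\<forall>i<dim F. v i \<in> F) \<and> inj_on v {..<dim F} \<and> independent (v ` {..<dim F}) \<and> span (v ` {..<dim F}) = F"
  have ab: "abelian_subspace F" using mF unfolding maximal_flat_tangent_def by blast
  show "\<exists>w :: nat \<Rightarrow> nat \<Rightarrow> real^'n^'n.
             (\<forall>i<dim F. \<forall>j<3. w i j \<in> tangent_p \<and> norm (w i j) = 1) \<and>
             (\<forall>i<dim F. \<forall>j<3. \<forall>i'<dim F. \<forall>j'<3. (i, j) \<noteq> (i', j') \<longrightarrow> w i j \<bullet> w i' j' = 0) \<and>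
             (\<forall>i<dim F. span {w i 0, w i 1, w i 2} \<subseteq>
                orth_in_tangent (span (\<Union>k\<in>stab_of (v i). Ad k ` F)))"
    using main_construction[OF assms ab] hv by blast
qed

end
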